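(* Let $d\ge 2$. There are a constant $C>0$ and $n_0(d)$ depending only on $d$ such that for all $n\ge n_0(d)$ the following holds. Let $\mathcal{F}$, $B_i$ be as in the context, let $J\subseteq[n]$ with $|J|\le n/4$, and let $K\ge 0$ be a real number with $|E(\mathcal{G}_J)|\ge\binom{n-|J|}{d}-Kn$. Let $\mathcal{S}\subseteq\binom{[n]\setminus J}{d-1}$ be the family of $(d-1)$-subsets of $[n]\setminus J$ that are contained in at most $100d+|J|$ edges of $\mathcal{G}_J$. Then $|\mathcal{S}|\le CK$.
   Context: Let $\mathcal{F}=\{F_1,\dots,F_m\}\subseteq\binom{[n]}{d+1}$ consist of distinct sets and have VC-dimension at most $d$ (no $(d+1)$-set $S$ is shattered, i.e. no $S$ such that every $A\subseteq S$ equals $F\cap S$ for some $F\in\mathcal{F}$). For $i\in[m]$, call $B\subsetneq F_i$ admissible for $F_i$ if $F\cap F_i\neq B$ for every $F\in\mathcal{F}$. For each $i$, $B_i$ is a fixed admissible set for $F_i$ of maximum cardinality among all admissible sets. For $J\subseteq[n]$, $\mathcal{G}_J$ is the $d$-uniform hypergraph on vertex set $[n]\setminus J$ with edge set $E(\mathcal{G}_J):=\{F_k\setminus J: k\in[m],\ |F_k\cap J|=1\}$. *)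

theory Defs
  imports Complex_Main
begin

definition shatters :: "nat set set \<Rightarrow> nat set \<Rightarrow> bool" where
  "shatters FF S \<longleftrightarrow> (\<forall>A. A \<subseteq> S \<longrightarrow> (\<exists>F\<in>FF. F \<inter> S = A))"

definition vc_dim_le :: "nat set set \<Rightarrow> nat \<Rightarrow> bool" where
  "vc_dim_le FF d \<longleftrightarrow> \<not> (\<exists>S. card S = d + 1 \<and> finite S \<and> shatters FF S)"

definition admissible :: "nat set set \<Rightarrow> nat set \<Rightarrow> nat set \<Rightarrow> bool" where
  "admissible FF Fi B \<longleftrightarrow> B \<subset> Fi \<and> (\<forall>F\<in>FF. F \<inter> Fi \<noteq> B)"

definition edgesG :: "nat set set \<Rightarrow> nat set \<Rightarrow> nat set set" where
  "edgesG FF J = {F - J | F. F \<in> FF \<and> card (F \<inter> J) = 1}"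

end

theory Submission
  imports Defs
begin

lemma sum_ind_card:
  assumes "finite A"
  shows "(\<Sum>x\<in>A. if P x then 1 else (0::real)) = real (card {x \<in> A. P x})"
  using sum.inter_filter[OF assms, of "\<lambda>_. (1::real)" P] by simp

lemma key:
  fixes d n :: nat and FF :: "nat set set" and J :: "nat set" and K :: real
  assumes d2: "d \<ge> 2" and nbig: "n \<ge> 404 * d"
    and FFs: "FF \<subseteq> {A. A \<subseteq> {1..n} \<and> card A = d + 1}"
    and Jn: "J \<subseteq> {1..n}" and Jc: "real (card J) \<le> real n / 4"
    and K0: "K \<ge> 0"
    and Ebig: "real (card (edgesG FF J)) \<ge> real ((n - card J) choose d) - K * real n"
  shows "real (card {T. T \<subseteq> {1..n} - J \<and> card T = d - 1 \<and>
                   card {e \<in> edgesG FF J. T \<subseteq> e} \<le> 100 * d + card J})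
        \<le> (4 * real d) * K"
proof -
  define U where "U = {1..n} - J"
  define E where "E = edgesG FF J"
  define D where "D = {X. X \<subseteq> U \<and> card X = d}"
  define M where "M = D - E"
  define S where "S = {T. T \<subseteq> U \<and> card T = d - 1 \<and> card {e \<in> E. T \<subseteq> e} \<le> 100 * d + card J}"
  have finU: "finite U" unfolding U_def by simp
  have cardU: "card U = n - card J" unfolding U_def using Jn by (simp add: card_Diff_subset finite_subset)
  have cardJle: "card J \<le> n" using card_mono[OF finite_atLeastAtMost Jn] by simp
  have finD: "finite D" unfolding D_def using finU by simp
  have cardD: "card D = card U choose d" unfolding D_def using n_subsets[OF finU] by simp
  have ED: "E \<subseteq> D"
  proof
    fix X assume "X \<in> E"
    then obtain F where F: "X = F - J" "F \<in> FF" "card (F \<inter> J) = 1" unfolding E_def edgesG_def by auto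
    have Fs: "F \<subseteq> {1..n}" "card F = d + 1" using F(2) FFs by auto
    have "finite F" using Fs(1) finite_subset by blast
    then have "card (F - J) = card F - card (F \<inter> J)" by (simp add: card_Diff_subset_Int)
    then have "card X = d" using F Fs by simp
    moreover have "X \<subseteq> U" using F Fs unfolding U_def by auto
    ultimately show "X \<in> D" unfolding D_def by simp
  qed
  have finE: "finite E" using ED finD finite_subset by blast
  have cardM: "card M = card D - card E" unfolding M_def using ED finE by (simp add: card_Diff_subset)
  have EleD: "card E \<le> card D" using ED finD card_mono by blast
  have Mle: "real (card M) \<le> K * real n"
    using cardM EleD Ebig cardD cardU unfolding E_def by (simp add: of_nat_diff)
  have finM: "finite M" unfolding M_def using finD by simp
  have finS: "finite S" unfolding S_def using finU by (simp add: finite_subset)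
  have lowT: "real (card {X \<in> M. T \<subseteq> X}) \<ge> real (card U) - real d + 1 - 100 * real d - real (card J)"
    if TS: "T \<in> S" for T
  proof -
    have TU: "T \<subseteq> U" and cT: "card T = d - 1" and degT: "card {e \<in> E. T \<subseteq> e} \<le> 100 * d + card J"
      using TS unfolding S_def by auto
    have finT: "finite T" using TU finU finite_subset by blast
    have inj: "inj_on (\<lambda>v. insert v T) (U - T)"
      proof (rule inj_onI)
      fix x y assume "x \<in> U - T" "y \<in> U - T" "insert x T = insert y T"
      then have "x \<in> insert y T" by blast
      then show "x = y" using \<open>x \<in> U - T\<close> by blast
    qed
    have img: "(\<lambda>v. insert v T) ` (U - T) \<subseteq> {X \<in> D. T \<subseteq> X}"
    proof
      fix X assume "X \<in> (\<lambda>v. insert v T) ` (U - T)"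
      then obtain v where v: "v \<in> U" "v \<notin> T" "X = insert v T" by auto
      have "card X = d" using v finT cT d2 by simp
      then show "X \<in> {X \<in> D. T \<subseteq> X}" using v TU unfolding D_def by auto
    qed
    have "card (U - T) = card U - (d - 1)" using TU finT cT by (simp add: card_Diff_subset)
    moreover have "card (U - T) \<le> card {X \<in> D. T \<subseteq> X}"
      using card_inj_on_le[OF inj img] finD by simp
    moreover have "card {X \<in> D. T \<subseteq> X} \<le> card {X \<in> M. T \<subseteq> X} + card {e \<in> E. T \<subseteq> e}"
    proof -
      have "{X \<in> D. T \<subseteq> X} \<subseteq> {X \<in> M. T \<subseteq> X} \<union> {e \<in> E. T \<subseteq> e}"
        unfolding M_def by auto
      then have "card {X \<in> D. T \<subseteq> X} \<le> card ({X \<in> M. T \<subseteq> X} \<union> {e \<in> E. T \<subseteq> e})"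
        by (rule card_mono[rotated]) (use finE finM in simp)
      also have "\<dots> \<le> card {X \<in> M. T \<subseteq> X} + card {e \<in> E. T \<subseteq> e}" by (rule card_Un_le)
      finally show ?thesis .
    qed
    moreover have "card T \<le> card U" using TU finU card_mono by blast
    ultimately show ?thesis using degT cT d2
      by (simp add: of_nat_diff)
  qed
  have upX: "card {T \<in> S. T \<subseteq> X} \<le> d" if XM: "X \<in> M" for X
  proof -
    have cX: "card X = d" and finX: "finite X" using XM unfolding M_def D_def
      using finU finite_subset by auto
    have "{T \<in> S. T \<subseteq> X} \<subseteq> {T. T \<subseteq> X \<and> card T = d - 1}" unfolding S_def by auto
    moreover have "card {T. T \<subseteq> X \<and> card T = d - 1} = d"
      using n_subsets[OF finX, of "d-1"] cX d2 binomial_symmetric[of "d-1" d] by (simp add: choose_one)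
    moreover have "finite {T. T \<subseteq> X \<and> card T = d - 1}" using finX by simp
    ultimately show ?thesis using card_mono[of "{T. T \<subseteq> X \<and> card T = d - 1}" "{T \<in> S. T \<subseteq> X}"] by simp
  qed
  define L where "L = real (card U) - real d + 1 - 100 * real d - real (card J)"
  have Lge: "L \<ge> real n / 4"
  proof -
    have "real (card U) = real n - real (card J)" using cardU cardJle by (simp add: of_nat_diff)
    moreover have "real n \<ge> 404 * real d" using nbig by (metis of_nat_le_iff of_nat_mult of_nat_numeral)
    ultimately show ?thesis using Jc unfolding L_def by linarith
  qed
  have "real (card S) * L = (\<Sum>T\<in>S. L)" by simp
  also have "\<dots> \<le> (\<Sum>T\<in>S. real (card {X \<in> M. T \<subseteq> X}))"
    by (rule sum_mono) (use lowT L_def in auto)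
  also have "\<dots> = (\<Sum>T\<in>S. \<Sum>X\<in>M. if T \<subseteq> X then 1 else 0)"
    using finM by (simp add: sum_ind_card)
  also have "\<dots> = (\<Sum>X\<in>M. \<Sum>T\<in>S. if T \<subseteq> X then 1 else 0)"
    by (rule sum.swap)
  also have "\<dots> = (\<Sum>X\<in>M. real (card {T \<in> S. T \<subseteq> X}))"
    using finS by (simp add: sum_ind_card)
  also have "\<dots> \<le> (\<Sum>X\<in>M. real d)"
    by (rule sum_mono) (use upX in auto)
  also have "\<dots> = real d * real (card M)" by simp
  also have "\<dots> \<le> real d * (K * real n)" using Mle by (simp add: mult_left_mono)
  finally have A: "real (card S) * L \<le> real d * (K * real n)" .
  have npos: "real n > 0" using nbig d2 by simp
  have "real (card S) * (real n / 4) \<le> real (card S) * L" using Lge by (intro mult_left_mono) auto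
  with A have "real (card S) * (real n / 4) \<le> (4 * real d * K) * (real n / 4)" by (simp add: algebra_simps)
  then have "real (card S) \<le> 4 * real d * K" using npos by (simp add: mult_le_cancel_right)
  then show ?thesis unfolding S_def U_def E_def by simp
qed

theorem fact3p7:
  fixes d :: nat
  assumes "d \<ge> 2"
  shows "\<exists>C::real. C > 0 \<and> (\<exists>n0::nat. \<forall>n\<ge>n0.
    \<forall>(FF :: nat set set) (B :: nat set \<Rightarrow> nat set) (J :: nat set) (K :: real).
      FF \<subseteq> {A. A \<subseteq> {1..n} \<and> card A = d + 1} \<longrightarrow>
      vc_dim_le FF d \<longrightarrow>
      (\<forall>Fi\<in>FF. admissible FF Fi (B Fi) \<and>
                 (\<forall>B'. admissible FF Fi B' \<longrightarrow> card B' \<le> card (B Fi))) \<longrightarrow>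
      J \<subseteq> {1..n} \<longrightarrow> real (card J) \<le> real n / 4 \<longrightarrow>
      K \<ge> 0 \<longrightarrow>
      real (card (edgesG FF J)) \<ge> real ((n - card J) choose d) - K * real n \<longrightarrow>
      real (card {T. T \<subseteq> {1..n} - J \<and> card T = d - 1 \<and>
                   card {e \<in> edgesG FF J. T \<subseteq> e} \<le> 100 * d + card J})
        \<le> C * K)"
  using assms key[where d=d]
  by (intro exI[of _ "4 * real d"] conjI exI[of _ "404 * d"]) auto

end
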